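(* Let $c\in\mathbb{R}$, $T>0$ and $f\in B^2_{c,T}$. Then $f\in C^\infty(\mathbb{R}^+)$ and for every $k=0,1,2,\ldots$ $$\lim_{x\to 0^+} x^c\,\Theta_c^k f(x)=\lim_{x\to+\infty} x^c\,\Theta_c^k f(x)=0 .$$
   Context: $\mathbb{R}^+=(0,\infty)$. For $c\in\mathbb{R}$, $X^2_c$ is the space of measurable $f:\mathbb{R}^+\to\mathbb{C}$ with $f(x)x^{c-1/2}\in L^2(\mathbb{R}^+)$, normed by $\|f\|_{X^2_c}=\big(\int_0^\infty |f(u)|^2u^{2c-1}\,du\big)^{1/2}$. For $f\in X^2_c$ the Mellin transform $[f]^\wedge_{M^2}(c+it)$, $t\in\mathbb{R}$, is the $L^2(\mathbb{R})$-limit (in the variable $t$) as $\rho\to\infty$ of $\int_{1/\rho}^{\rho} f(u)u^{c+it-1}\,du$. $B^2_{c,T}$ is the set of $f\in X^2_c\cap C(\mathbb{R}^+)$ such that $[f]^\wedge_{M^2}(c+it)=0$ for almost every $|t|>T$. The Mellin derivative is $\Theta_c f(x)=xf'(x)+cf(x)$, with $\Theta_c^0 f=f$ and $\Theta_c^r=\Theta_c(\Theta_c^{r-1})$. *)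

theory Defs
  imports "HOL-Analysis.Analysis"
begin

definition X2 :: "real \<Rightarrow> (real \<Rightarrow> complex) \<Rightarrow> bool" where
  "X2 c f \<longleftrightarrow> set_borel_measurable lebesgue {0<..} f \<and>
     set_integrable lebesgue {0<..} (\<lambda>u. (cmod (f u))\<^sup>2 * u powr (2 * c - 1))"

definition mellin_trunc :: "real \<Rightarrow> (real \<Rightarrow> complex) \<Rightarrow> real \<Rightarrow> real \<Rightarrow> complex" where
  "mellin_trunc c f \<rho> t =
     (LBINT u=1/\<rho>..\<rho>. f u * (complex_of_real u) powr (complex_of_real c + \<i> * complex_of_real t - 1))"

text \<open>g is (a representative of) the L^2-Mellin transform [f]^_{M^2}(c+it), as a function of t:
  the L^2(R)-limit of the truncated integrals as rho tends to infinity.\<close>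
definition is_mellin_L2 :: "real \<Rightarrow> (real \<Rightarrow> complex) \<Rightarrow> (real \<Rightarrow> complex) \<Rightarrow> bool" where
  "is_mellin_L2 c f g \<longleftrightarrow>
     g \<in> borel_measurable lborel \<and>
     integrable lborel (\<lambda>t. (cmod (g t))\<^sup>2) \<and>
     ((\<lambda>\<rho>. \<integral>\<^sup>+ t. ennreal ((cmod (mellin_trunc c f \<rho> t - g t))\<^sup>2) \<partial>lborel) \<longlongrightarrow> 0) at_top"

definition B2 :: "real \<Rightarrow> real \<Rightarrow> (real \<Rightarrow> complex) \<Rightarrow> bool" where
  "B2 c T f \<longleftrightarrow> X2 c f \<and> continuous_on {0<..} f \<and>
     (\<exists>g. is_mellin_L2 c f g \<and> (AE t in lborel. \<bar>t\<bar> > T \<longrightarrow> g t = 0))"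

definition mellin_deriv :: "real \<Rightarrow> (real \<Rightarrow> complex) \<Rightarrow> real \<Rightarrow> complex" where
  "mellin_deriv c f = (\<lambda>x. complex_of_real x * vector_derivative f (at x) + complex_of_real c * f x)"

definition higher_vderiv :: "nat \<Rightarrow> (real \<Rightarrow> complex) \<Rightarrow> real \<Rightarrow> complex" where
  "higher_vderiv k f = ((\<lambda>g x. vector_derivative g (at x)) ^^ k) f"

definition smooth_on :: "real set \<Rightarrow> (real \<Rightarrow> complex) \<Rightarrow> bool" where
  "smooth_on S f \<longleftrightarrow> (\<forall>k. \<forall>x\<in>S. higher_vderiv k f differentiable (at x))"

end

theory Submission
  imports Defs "HOL-Probability.Probability"
begin

locale PW =
  fixes G :: "real \<Rightarrow> complex" and T :: real
  assumes Gint: "integrable lborel G" and Gsupp: "\<And>t. \<bar>t\<bar> > T \<Longrightarrow> G t = 0" and Tpos: "T > 0"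
begin

definition h :: "nat \<Rightarrow> real \<Rightarrow> complex" where "h m t = (- (\<i> * of_real t))^m * G t"
definition Psi :: "nat \<Rightarrow> real \<Rightarrow> complex" where "Psi m v = (\<integral>t. h m t * iexp (- (t* v)) \<partial>lborel)"
definition NG where "NG = (\<integral>t. norm (G t) \<partial>lborel)"

lemma G_meas[measurable]: "G \<in> borel_measurable borel"
  using Gint by (simp add: borel_measurable_integrable)

lemma h_meas[measurable]: "h m \<in> borel_measurable borel"
  unfolding h_def by measurable

lemma h_bound: "norm (h m t) \<le> T^m * norm (G t)"
proof (cases "\<bar>t\<bar> > T")
  case True then show ?thesis using Gsupp[OF True] by (simp add: h_def)
next
  case False
  then have "norm (- (\<i> * of_real t))^m \<le> T^m"
    by (intro power_mono) (auto simp: norm_mult)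
  then show ?thesis unfolding h_def norm_mult norm_power
    by (intro mult_right_mono) auto
qed

lemma h_int: "integrable lborel (h m)"
proof (rule Bochner_Integration.integrable_bound[of _ "\<lambda>t. T^m * norm (G t)"])
  show "integrable lborel (\<lambda>t. T^m * norm (G t))" using Gint by auto
  show "AE x in lborel. norm (h m x) \<le> norm (T^m * norm (G x))"
    using h_bound[of m] Tpos by (auto simp: abs_mult)
qed simp

lemma NG_nonneg: "NG \<ge> 0" unfolding NG_def by simp

lemma integrand_int: "integrable lborel (\<lambda>t. h m t * iexp (- (t* v)))"
  by (rule Bochner_Integration.integrable_bound[of _ "\<lambda>t. norm (h m t)"])
     (use h_int in \<open>auto simp: norm_mult\<close>)

lemma Psi_bound: "norm (Psi m v) \<le> T^m * NG"
proof -
  have "norm (Psi m v) \<le> (\<integral>t. norm (h m t * iexp (- (t* v))) \<partial>lborel)"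
    unfolding Psi_def by (rule integral_norm_bound)
  also have "\<dots> \<le> (\<integral>t. T^m * norm (G t) \<partial>lborel)"
    by (intro integral_mono integrand_int[THEN integrable_norm])
       (use Gint h_bound in \<open>auto simp: norm_mult\<close>)
  also have "\<dots> = T^m * NG" by (simp add: NG_def)
  finally show ?thesis .
qed

lemma iexp_taylor: "norm (iexp x - 1 - \<i> * of_real x) \<le> x^2 / 2"
  using iexp_approx1[of x 1] by (simp add: power2_eq_square algebra_simps)

lemma Psi_taylor:
  "norm (Psi m (v+d) - Psi m v - of_real d * Psi (Suc m) v) \<le> d^2 / 2 * T^(m+2) * NG"
proof -
  have eq: "Psi m (v+d) - Psi m v - of_real d * Psi (Suc m) v =
     (\<integral>t. h m t * iexp (- (t* v)) * (iexp (- (t* d)) - 1 - \<i> * of_real (- (t* d))) \<partial>lborel)"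
  proof -
    have "Psi m (v+d) - Psi m v - of_real d * Psi (Suc m) v =
      (\<integral>t. h m t * iexp (- (t*(v+d))) - h m t * iexp (- (t* v)) - of_real d * (h (Suc m) t * iexp (- (t* v))) \<partial>lborel)"
    proof -
      note i1 = integrand_int[of m "v+d"] and i2 = integrand_int[of m v] and i3 = integrand_int[of "Suc m" v]
      have "(\<integral>t. h m t * iexp (- (t * (v+d))) - h m t * iexp (- (t * v)) - of_real d * (h (Suc m) t * iexp (- (t * v))) \<partial>lborel)
        = (\<integral>t. h m t * iexp (- (t * (v+d))) - h m t * iexp (- (t * v)) \<partial>lborel) - (\<integral>t. of_real d * (h (Suc m) t * iexp (- (t * v))) \<partial>lborel)"
        by (intro Bochner_Integration.integral_diff Bochner_Integration.integrable_diff i1 i2 Bochner_Integration.integrable_mult_right i3)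
      also have "\<dots> = Psi m (v+d) - Psi m v - of_real d * Psi (Suc m) v"
        unfolding Psi_def Bochner_Integration.integral_diff[OF i1 i2] by simp
      finally show ?thesis by simp
    qed
    also have "\<dots> = (\<integral>t. h m t * iexp (- (t* v)) * (iexp (- (t* d)) - 1 - \<i> * of_real (- (t* d))) \<partial>lborel)"
    proof (rule Bochner_Integration.integral_cong[OF refl])
      fix t
      have "iexp (- (t*(v+d))) = iexp (- (t* v)) * iexp (- (t* d))"
        by (simp add: algebra_simps exp_add[symmetric])
      then show "h m t * iexp (- (t*(v+d))) - h m t * iexp (- (t* v)) - of_real d * (h (Suc m) t * iexp (- (t* v))) =
            h m t * iexp (- (t* v)) * (iexp (- (t* d)) - 1 - \<i> * of_real (- (t* d)))"
        by (simp add: h_def algebra_simps)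
    qed
    finally show ?thesis .
  qed
  have "norm (\<integral>t. h m t * iexp (- (t* v)) * (iexp (- (t* d)) - 1 - \<i> * of_real (- (t* d))) \<partial>lborel)
     \<le> (\<integral>t. norm (h m t * iexp (- (t* v)) * (iexp (- (t* d)) - 1 - \<i> * of_real (- (t* d)))) \<partial>lborel)"
    by (rule integral_norm_bound)
  also have "\<dots> \<le> (\<integral>t. d^2/2 * T^(m+2) * norm (G t) \<partial>lborel)"
  proof (rule integral_mono')
    show "integrable lborel (\<lambda>t. d^2/2 * T^(m+2) * norm (G t))" using Gint by auto
    fix t
    show "0 \<le> d^2/2 * T^(m+2) * norm (G t)" using Tpos by simp
    show "norm (h m t * iexp (- (t* v)) * (iexp (- (t* d)) - 1 - \<i> * of_real (- (t* d)))) \<le> d^2/2 * T^(m+2) * norm (G t)"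
    proof (cases "\<bar>t\<bar> > T")
      case True then show ?thesis using Gsupp[OF True] by (simp add: h_def)
    next
      case False
      have "norm (h m t * iexp (- (t* v)) * (iexp (- (t* d)) - 1 - \<i> * of_real (- (t* d))))
           = norm (h m t) * norm (iexp (- (t* d)) - 1 - \<i> * of_real (- (t* d)))"
        by (simp add: norm_mult)
      also have "\<dots> \<le> (T^m * norm (G t)) * ((- (t* d))^2/2)"
        using Tpos by (intro mult_mono h_bound iexp_taylor) auto
      also have "\<dots> = T^m * norm (G t) * (t^2 * d^2 / 2)" by (simp add: power2_eq_square)
      also have "\<dots> \<le> T^m * norm (G t) * (T^2 * d^2 / 2)"
      proof -
        have "\<bar>t\<bar> \<le> \<bar>T\<bar>" using False Tpos by simp
        then have "t^2 \<le> T^2" by (simp add: abs_le_square_iff)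
        then show ?thesis using Tpos by (intro mult_left_mono divide_right_mono mult_right_mono) auto
      qed
      also have "\<dots> = d^2/2 * T^(m+2) * norm (G t)" by (simp add: power_add power2_eq_square algebra_simps)
      finally show ?thesis .
    qed
  qed
  also have "\<dots> = d^2 / 2 * T^(m+2) * NG" by (simp add: NG_def)
  finally show ?thesis using eq by simp
qed

definition K where "K m = T^(m+2) * NG / 2"

lemma K_nonneg: "K m \<ge> 0" unfolding K_def using Tpos NG_nonneg by simp

lemma Psi_taylor': "norm (Psi m (v+d) - Psi m v - of_real d * Psi (Suc m) v) \<le> d^2 * K m"
  using Psi_taylor[of m v d] by (simp add: K_def)

lemma Psi_deriv: "(Psi m has_vector_derivative Psi (Suc m) v) (at v)"
  unfolding has_vector_derivative_def has_derivative_at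
proof (intro conjI)
  show "bounded_linear (\<lambda>x. x *\<^sub>R Psi (Suc m) v)" by (rule bounded_linear_scaleR_left)
  show "(\<lambda>d. norm (Psi m (v + d) - Psi m v - d *\<^sub>R Psi (Suc m) v) / norm d) \<midarrow>0\<rightarrow> 0"
  proof (rule Lim_null_comparison)
    show "\<forall>\<^sub>F d in at 0. norm (norm (Psi m (v + d) - Psi m v - d *\<^sub>R Psi (Suc m) v) / norm d) \<le> \<bar>d\<bar> * K m"
    proof (rule always_eventually, rule allI)
      fix d :: real
      show "norm (norm (Psi m (v + d) - Psi m v - d *\<^sub>R Psi (Suc m) v) / norm d) \<le> \<bar>d\<bar> * K m"
      proof (cases "d = 0")
        case True then show ?thesis by simp
      next
        case False
        have "norm (Psi m (v + d) - Psi m v - d *\<^sub>R Psi (Suc m) v) \<le> d^2 * K m"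
          using Psi_taylor'[of m v d] by (simp add: scaleR_conv_of_real)
        also have "\<dots> = (\<bar>d\<bar> * K m) * \<bar>d\<bar>" by (simp add: power2_eq_square abs_mult_self_eq)
        finally show ?thesis using False by (simp add: divide_le_eq)
      qed
    qed
    show "((\<lambda>d. \<bar>d\<bar> * K m) \<longlongrightarrow> 0) (at 0)"
      by (rule tendsto_eq_intros refl | simp)+
  qed
qed

lemma Psi_cont: "continuous (at v) (Psi m)"
  using Psi_deriv has_vector_derivative_continuous by blast

lemma norm_aux: "norm (of_real d * X) \<le> norm A + norm B + norm (A - B - of_real d * X)"
  for A B X :: complex
proof -
  have "of_real d * X = (A - B) - (A - B - of_real d * X)" by simp
  then have "norm (of_real d * X) \<le> norm (A - B) + norm (A - B - of_real d * X)"
    by (metis norm_triangle_ineq4)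
  also have "norm (A - B) \<le> norm A + norm B" by (rule norm_triangle_ineq4)
  finally show ?thesis by simp
qed

lemma Psi_Suc_tendsto:
  assumes lim: "(Psi m \<longlongrightarrow> 0) F" and sh: "\<And>d. filterlim (\<lambda>v. v + d) F F"
  shows "(Psi (Suc m) \<longlongrightarrow> 0) F"
proof (rule tendstoI)
  fix e :: real assume e: "e > 0"
  define d where "d = e / (2 * (K m + 1))"
  have K0: "K m \<ge> 0" by (rule K_nonneg)
  have d: "d > 0" using e K0 by (simp add: d_def)
  have dK: "d * K m < e / 2"
  proof -
    have "d * K m = e/2 * (K m / (K m + 1))" using K0 by (simp add: d_def field_simps)
    also have "\<dots> < e/2 * 1" using K0 e by (intro mult_strict_left_mono) auto
    finally show ?thesis by simp
  qed
  have ev1: "\<forall>\<^sub>F v in F. norm (Psi m v) < e * d / 4"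
    using tendstoD[OF lim, of "e*d/4"] e d by (simp add: dist_norm)
  have ev2: "\<forall>\<^sub>F v in F. norm (Psi m (v + d)) < e * d / 4"
  proof -
    have l2: "((\<lambda>v. Psi m (v + d)) \<longlongrightarrow> 0) F"
      using filterlim_compose[OF lim sh] by (simp add: o_def)
    show ?thesis using tendstoD[OF l2, of "e*d/4"] e d by (simp add: dist_norm)
  qed
  show "\<forall>\<^sub>F v in F. dist (Psi (Suc m) v) 0 < e"
    using ev1 ev2
  proof eventually_elim
    case (elim v)
    have "d * norm (Psi (Suc m) v) = norm (of_real d * Psi (Suc m) v)"
      using d by (simp add: norm_mult)
    also have "\<dots> \<le> norm (Psi m (v+d)) + norm (Psi m v) + norm (Psi m (v+d) - Psi m v - of_real d * Psi (Suc m) v)"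
      by (rule norm_aux)
    also have "\<dots> \<le> norm (Psi m (v+d)) + norm (Psi m v) + d^2 * K m"
      using Psi_taylor'[of m v d] by simp
    also have "\<dots> < e * d / 4 + e * d / 4 + d * (e / 2)"
    proof -
      have "d * (d * K m) < d * (e/2)" using mult_strict_left_mono[OF dK d] by simp
      moreover have "d^2 * K m = d * (d * K m)" by (simp add: power2_eq_square)
      moreover have "e * d = d * e" by simp
      ultimately show ?thesis using elim by linarith
    qed
    also have "\<dots> = d * e" by (simp add: field_simps)
    finally have "norm (Psi (Suc m) v) < e" using d by simp
    then show ?case by simp
  qed
qed

end

lemma L2_lip_tendsto_top:
  fixes P :: "real \<Rightarrow> complex"
  assumes cont: "continuous_on UNIV P"
    and L2: "integrable lborel (\<lambda>v. (norm (P v))^2)"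
    and C: "C > 0" and lip: "\<And>v d. \<bar>d\<bar> \<le> 1 \<Longrightarrow> norm (P (v+d) - P v) \<le> C * \<bar>d\<bar>"
  shows "(P \<longlongrightarrow> 0) at_top"
proof (rule tendstoI)
  fix e :: real assume e: "e > 0"
  have Pm[measurable]: "P \<in> borel_measurable borel"
    using cont by (rule borel_measurable_continuous_onI)
  define S where "S R = (\<integral>v. indicator {R..} v * (norm (P v))^2 \<partial>lborel)" for R
  have S_lim0: "(S \<longlongrightarrow> integral\<^sup>L lborel (\<lambda>v::real. 0::real)) at_top"
    unfolding S_def
  proof (rule integral_dominated_convergence_at_top[where w="\<lambda>v. (norm (P v))^2" and s="\<lambda>R v. indicator {R..} v * (norm (P v))^2" and f="\<lambda>v. 0" and M=lborel])
    show "integrable lborel (\<lambda>v. (norm (P v))^2)" by (rule L2)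
    show "AE x in lborel. ((\<lambda>R. indicator {R..} x * (norm (P x))\<^sup>2) \<longlongrightarrow> 0) at_top"
    proof (rule AE_I2)
      fix x :: real
      have "\<forall>\<^sub>F R in at_top. indicator {R..} x * (norm (P x))\<^sup>2 = (0::real)"
        using eventually_gt_at_top[of x] by eventually_elim (auto simp: indicator_def)
      then show "((\<lambda>R. indicator {R..} x * (norm (P x))\<^sup>2) \<longlongrightarrow> 0) at_top"
        by (rule tendsto_eventually)
    qed
    show "\<forall>\<^sub>F i in at_top. AE x in lborel. norm (indicator {i..} x * (norm (P x))\<^sup>2) \<le> (norm (P x))\<^sup>2"
      by (intro always_eventually allI AE_I2) (auto simp: indicator_def)
  qed auto
  then have S_lim: "(S \<longlongrightarrow> 0) at_top" by simp
  define \<delta> where "\<delta> = min 1 (e / (2 * C))"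
  have \<delta>: "\<delta> > 0" "\<delta> \<le> 1" "C * \<delta> \<le> e / 2" using e C by (auto simp: \<delta>_def field_simps min_def)
  have "\<forall>\<^sub>F R in at_top. S R < \<delta> * (e/2)^2"
    using S_lim \<delta> e by (simp add: order_tendstoD)
  then obtain R0 where R0: "\<And>R. R \<ge> R0 \<Longrightarrow> S R < \<delta> * (e/2)^2"
    by (auto simp: eventually_at_top_linorder)
  show "\<forall>\<^sub>F v in at_top. dist (P v) 0 < e"
    unfolding eventually_at_top_linorder
  proof (intro exI[of _ R0] allI impI)
    fix v assume v: "v \<ge> R0"
    show "dist (P v) 0 < e"
    proof (rule ccontr)
      assume "\<not> dist (P v) 0 < e"
      then have Pv: "norm (P v) \<ge> e" by simp
      have low: "indicator {v..v+\<delta>} w * (e/2)^2 \<le> indicator {v..} w * (norm (P w))^2" for w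
      proof (cases "w \<in> {v..v+\<delta>}")
        case True
        then have "\<bar>w - v\<bar> \<le> 1" using \<delta> by auto
        from lip[OF this, of v] have "norm (P w - P v) \<le> C * \<bar>w - v\<bar>" by simp
        also have "\<dots> \<le> C * \<delta>" using True C by (intro mult_left_mono) auto
        finally have "norm (P w - P v) \<le> e/2" using \<delta> by simp
        then have "norm (P w) \<ge> e/2" using Pv norm_triangle_ineq2[of "P v" "P w"]
          by (simp add: norm_minus_commute)
        then have "(e/2)^2 \<le> (norm (P w))^2" using e by (intro power_mono) auto
        then show ?thesis using True by simp
      qed (auto simp: indicator_def)
      have "\<delta> * (e/2)^2 = (\<integral>w. indicator {v..v+\<delta>} w * (e/2)^2 \<partial>lborel)"
        using \<delta> by simp
      also have "\<dots> \<le> S v"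
        unfolding S_def
      proof (rule integral_mono)
        show "integrable lborel (\<lambda>w. indicator {v..v+\<delta>} w * (e/2)^2)" by (intro integrable_mult_left integrable_real_indicator) (auto simp: emeasure_lborel_Icc_eq)
        show "integrable lborel (\<lambda>w. indicator {v..} w * (norm (P w))^2)"
          by (rule Bochner_Integration.integrable_bound[OF L2]) (auto simp: indicator_def)
      qed (use low in auto)
      finally show False using R0[OF v] by simp
    qed
  qed
qed

lemma L2_lip_tendsto_bot:
  fixes P :: "real \<Rightarrow> complex"
  assumes cont: "continuous_on UNIV P"
    and L2: "integrable lborel (\<lambda>v. (norm (P v))^2)"
    and C: "C > 0" and lip: "\<And>v d. \<bar>d\<bar> \<le> 1 \<Longrightarrow> norm (P (v+d) - P v) \<le> C * \<bar>d\<bar>"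
  shows "(P \<longlongrightarrow> 0) at_bot"
proof -
  have "((\<lambda>v. P (-v)) \<longlongrightarrow> 0) at_top"
  proof (rule L2_lip_tendsto_top[OF _ _ C])
    show "continuous_on UNIV (\<lambda>v. P (- v))"
      by (intro continuous_on_compose2[OF cont]) (auto intro: continuous_intros)
    show "integrable lborel (\<lambda>v. (norm (P (- v)))^2)"
      using lborel_integrable_real_affine_iff[of "-1" "\<lambda>v. (norm (P v))^2" 0] L2 by simp
    fix v d :: real assume "\<bar>d\<bar> \<le> 1"
    then have "norm (P (-v + -d) - P (-v)) \<le> C * \<bar>-d\<bar>" by (intro lip) simp
    then show "norm (P (- (v + d)) - P (- v)) \<le> C * \<bar>d\<bar>" by simp
  qed
  then show ?thesis by (simp add: filterlim_at_bot_mirror)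
qed

lemma shift_at_top: "filterlim (\<lambda>v. v + d) at_top (at_top :: real filter)"
  unfolding filterlim_at_top
proof
  fix Z :: real
  show "\<forall>\<^sub>F x in at_top. Z \<le> x + d"
    using eventually_ge_at_top[of "Z - d"] by eventually_elim simp
qed

lemma shift_at_bot: "filterlim (\<lambda>v. v + d) at_bot (at_bot :: real filter)"
  unfolding filterlim_at_bot
proof
  fix Z :: real
  show "\<forall>\<^sub>F x in at_bot. x + d \<le> Z"
    using eventually_le_at_bot[of "Z - d"] by eventually_elim simp
qed

context PW begin

lemma Psi0_lip: "\<bar>d\<bar> \<le> 1 \<Longrightarrow> norm (Psi 0 (v+d) - Psi 0 v) \<le> (K 0 + T * NG + 1) * \<bar>d\<bar>"
proof -
  assume d: "\<bar>d\<bar> \<le> 1"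
  have "Psi 0 (v+d) - Psi 0 v = (Psi 0 (v+d) - Psi 0 v - of_real d * Psi (Suc 0) v) + of_real d * Psi (Suc 0) v"
    by simp
  then have "norm (Psi 0 (v+d) - Psi 0 v) \<le> norm (Psi 0 (v+d) - Psi 0 v - of_real d * Psi (Suc 0) v) + norm (of_real d * Psi (Suc 0) v)"
    by (metis norm_triangle_ineq)
  also have "\<dots> \<le> d^2 * K 0 + \<bar>d\<bar> * (T * NG)"
  proof (rule add_mono)
    show "norm (Psi 0 (v+d) - Psi 0 v - of_real d * Psi (Suc 0) v) \<le> d^2 * K 0" by (rule Psi_taylor')
    have "norm (of_real d * Psi (Suc 0) v) = \<bar>d\<bar> * norm (Psi (Suc 0) v)" by (simp add: norm_mult)
    also have "\<dots> \<le> \<bar>d\<bar> * (T * NG)" using Psi_bound[of "Suc 0" v] by (intro mult_left_mono) auto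
    finally show "norm (of_real d * Psi (Suc 0) v) \<le> \<bar>d\<bar> * (T * NG)" .
  qed
  also have "d^2 * K 0 \<le> \<bar>d\<bar> * K 0"
  proof -
    have e1: "d^2 = \<bar>d\<bar> * \<bar>d\<bar>" by (simp add: power2_eq_square)
    have "\<bar>d\<bar> * \<bar>d\<bar> \<le> \<bar>d\<bar> * 1" using d by (intro mult_left_mono) auto
    then have "d^2 \<le> \<bar>d\<bar>" using e1 by simp
    then show ?thesis by (rule mult_right_mono[OF _ K_nonneg[of 0]])
  qed
  finally show ?thesis using d by (simp add: algebra_simps)
qed

lemma Psi_all_tendsto:
  assumes L2: "integrable lborel (\<lambda>v. (norm (Psi 0 v))^2)"
  shows "(Psi m \<longlongrightarrow> 0) at_top \<and> (Psi m \<longlongrightarrow> 0) at_bot"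
proof (induction m)
  case 0
  have cont: "continuous_on UNIV (Psi 0)"
    using Psi_cont by (simp add: continuous_on_eq_continuous_at)
  have "T * NG \<ge> 0" using NG_nonneg Tpos by simp
  then have C: "K 0 + T * NG + 1 > 0" using K_nonneg[of 0] by linarith
  show ?case
    using L2_lip_tendsto_top[OF cont L2 C Psi0_lip] L2_lip_tendsto_bot[OF cont L2 C Psi0_lip] by blast
next
  case (Suc m)
  then show ?case using Psi_Suc_tendsto[OF _ shift_at_top] Psi_Suc_tendsto[OF _ shift_at_bot] by blast
qed

lemma base_deriv:
  assumes x: "x > 0"
  shows "((\<lambda>x. of_real (a * x powr p) * Psi m (ln x)) has_vector_derivative
          (of_real (a * p * x powr (p-1)) * Psi m (ln x) + of_real (a * x powr (p-1)) * Psi (Suc m) (ln x))) (at x)"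
proof -
  have d1: "((\<lambda>x. of_real (a * x powr p)) has_vector_derivative of_real (a * (p * x powr (p - 1)))) (at x)"
    by (intro has_vector_derivative_of_real derivative_eq_intros) (use x in auto)
  have dln: "(ln has_vector_derivative (1/x)) (at x)"
    using DERIV_ln[OF x] by (simp add: has_real_derivative_iff_has_vector_derivative divide_inverse)
  have d2: "((\<lambda>x. Psi m (ln x)) has_vector_derivative ((1/x) *\<^sub>R Psi (Suc m) (ln x))) (at x)"
    using vector_diff_chain_at[OF dln Psi_deriv] by (simp add: o_def)
  have D: "((\<lambda>x. of_real (a * x powr p) * Psi m (ln x)) has_vector_derivative
     (of_real (a * x powr p) * ((1/x) *\<^sub>R Psi (Suc m) (ln x)) + of_real (a * (p * x powr (p - 1))) * Psi m (ln x))) (at x)"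
    by (rule has_vector_derivative_mult[OF d1 d2])
  have eq: "of_real (a * x powr p) * ((1/x) *\<^sub>R Psi (Suc m) (ln x)) + of_real (a * (p * x powr (p - 1))) * Psi m (ln x)
     = of_real (a * p * x powr (p-1)) * Psi m (ln x) + of_real (a * x powr (p-1)) * Psi (Suc m) (ln x)"
  proof -
    have "x powr p * (1/x) = x powr (p-1)" using x by (simp add: powr_diff divide_inverse)
    then have "of_real (a * x powr p) * ((1/x) *\<^sub>R Psi (Suc m) (ln x)) = of_real (a * (x powr p * (1/x))) * Psi (Suc m) (ln x)"
      unfolding scaleR_conv_of_real of_real_mult by (simp add: algebra_simps)
    also have "\<dots> = of_real (a * x powr (p-1)) * Psi (Suc m) (ln x)" using \<open>x powr p * (1/x) = x powr (p-1)\<close> by simp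
    finally have "of_real (a * x powr p) * ((1/x) *\<^sub>R Psi (Suc m) (ln x)) = of_real (a * x powr (p-1)) * Psi (Suc m) (ln x)" .
    then show ?thesis by (simp add: algebra_simps)
  qed
  show ?thesis using D unfolding eq .
qed

inductive nice :: "(real \<Rightarrow> complex) \<Rightarrow> bool" where
  nice_base: "(\<And>x. \<phi> x = of_real (a * x powr p) * Psi m (ln x)) \<Longrightarrow> nice \<phi>"
| nice_add: "nice \<phi> \<Longrightarrow> nice \<psi> \<Longrightarrow> (\<And>x. \<rho> x = \<phi> x + \<psi> x) \<Longrightarrow> nice \<rho>"

lemma nice_deriv: "nice \<phi> \<Longrightarrow> \<exists>\<phi>'. nice \<phi>' \<and> (\<forall>x>0. (\<phi> has_vector_derivative \<phi>' x) (at x))"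
proof (induction rule: nice.induct)
  case (nice_base \<phi> a p m)
  have n1: "nice (\<lambda>x. of_real (a * p * x powr (p-1)) * Psi m (ln x))" by (rule nice.nice_base[where a="a*p" and p="p-1" and m=m]) simp
  have n2: "nice (\<lambda>x. of_real (a * x powr (p-1)) * Psi (Suc m) (ln x))" by (rule nice.nice_base[where a="a" and p="p-1" and m="Suc m"]) simp
  have n3: "nice (\<lambda>x. of_real (a * p * x powr (p-1)) * Psi m (ln x) + of_real (a * x powr (p-1)) * Psi (Suc m) (ln x))"
    by (rule nice.nice_add[OF n1 n2]) simp
  have "\<phi> = (\<lambda>x. of_real (a * x powr p) * Psi m (ln x))" using nice_base by auto
  then show ?case
    using n3 base_deriv[where a=a and p=p and m=m] by (intro exI[of _ "\<lambda>x. of_real (a * p * x powr (p-1)) * Psi m (ln x) + of_real (a * x powr (p-1)) * Psi (Suc m) (ln x)"]) simp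
next
  case (nice_add \<phi> \<psi> \<rho>)
  then obtain \<phi>' \<psi>' where "nice \<phi>'" "\<forall>x>0. (\<phi> has_vector_derivative \<phi>' x) (at x)"
    "nice \<psi>'" "\<forall>x>0. (\<psi> has_vector_derivative \<psi>' x) (at x)" by blast
  moreover have "\<rho> = (\<lambda>x. \<phi> x + \<psi> x)" using nice_add by auto
  ultimately show ?case
    by (intro exI[of _ "\<lambda>x. \<phi>' x + \<psi>' x"]) (auto intro: nice.nice_add intro!: has_vector_derivative_add)
qed

end

lemma le_1_plus_sq: "(a::real) \<le> 1 + a^2"
proof (cases "a \<le> 1")
  case True then show ?thesis by (smt (verit) zero_le_power2)
next
  case False
  then have "a * 1 \<le> a * a" by (intro mult_left_mono) auto
  then show ?thesis by (simp add: power2_eq_square)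
qed

locale INV =
  fixes c T :: real and f g :: "real \<Rightarrow> complex"
  assumes Tpos: "T > 0" and X2f: "X2 c f" and fcont: "continuous_on {0<..} f"
    and mel: "is_mellin_L2 c f g" and gsupp: "AE t in lborel. \<bar>t\<bar> > T \<longrightarrow> g t = 0"
begin

definition G where "G t = g t * indicator {-T..T} t"
definition F where "F v = of_real (exp (c * v)) * f (exp v)"

lemma g_meas[measurable]: "g \<in> borel_measurable borel"
  using mel unfolding is_mellin_L2_def by simp

lemma g_sq_int: "integrable lborel (\<lambda>t. (norm (g t))^2)"
  using mel unfolding is_mellin_L2_def by simp

lemma G_meas[measurable]: "G \<in> borel_measurable borel"
  unfolding G_def by measurable

lemma AE_gG: "AE t in lborel. g t = G t"
  using gsupp by eventually_elim (auto simp: G_def indicator_def)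

lemma G_int: "integrable lborel G"
proof (rule Bochner_Integration.integrable_bound[of _ "\<lambda>t. indicator {-T..T} t * (1 + (norm (g t))^2)"])
  show "integrable lborel (\<lambda>t. indicator {-T..T} t * (1 + (norm (g t))^2))"
  proof -
    have "integrable lborel (\<lambda>t. indicator {-T..T} t + (norm (g t))^2 * indicator {-T..T} t)"
    proof (intro Bochner_Integration.integrable_add)
      show "integrable lborel (indicat_real {-T..T})"
        by (intro integrable_real_indicator) (auto simp: emeasure_lborel_Icc_eq)
      show "integrable lborel (\<lambda>t. (norm (g t))^2 * indicat_real {-T..T} t)"
        by (rule integrable_real_mult_indicator) (auto intro: g_sq_int)
    qed
    then show ?thesis by (simp add: algebra_simps)
  qed
  show "AE t in lborel. norm (G t) \<le> norm (indicator {-T..T} t * (1 + (norm (g t))^2))"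
  proof (rule AE_I2)
    fix t
    have "norm (g t) \<le> 1 + (norm (g t))^2" by (rule le_1_plus_sq)
    then show "norm (G t) \<le> norm (indicator {-T..T} t * (1 + (norm (g t))^2))"
      by (auto simp: G_def indicator_def)
  qed
qed simp

lemma G_supp: "\<bar>t\<bar> > T \<Longrightarrow> G t = 0"
  by (auto simp: G_def indicator_def)

sublocale PW G T
  by unfold_locales (use G_int G_supp Tpos in auto)

lemma F_cont: "continuous_on UNIV F"
  unfolding F_def
  by (intro continuous_intros continuous_on_compose2[OF fcont]) auto

lemma F_meas[measurable]: "F \<in> borel_measurable borel"
  using F_cont by (rule borel_measurable_continuous_onI)

lemma F_L2: "integrable lborel (\<lambda>v. (norm (F v))^2)"
proof -
  define ft where "ft u = (norm (f u))^2 * u powr (2*c - 1)" for u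
  have ft_cont: "continuous_on {0<..} ft"
    unfolding ft_def by (intro continuous_intros continuous_on_norm fcont) auto
  have si: "set_integrable lebesgue {0<..} ft"
    using X2f unfolding X2_def ft_def by simp
  have si2: "set_integrable lborel {0<..} ft"
    using si unfolding set_integrable_def
    by (subst (asm) integrable_completion)
       (use borel_measurable_continuous_on_indicator[OF _ ft_cont] in auto)
  have si3: "set_integrable lborel (einterval 0 \<infinity>) (\<lambda>x. (norm (F (ln x)))^2 * (1/x))"
  proof -
    have "set_integrable lborel {0<..} (\<lambda>x. (norm (F (ln x)))^2 * (1/x))"
    proof (rule set_integrable_cong[THEN iffD1, OF refl refl _ si2])
      fix x :: real assume x: "x \<in> {0<..}"
      have "(norm (F (ln x)))^2 * (1/x) = (exp (c * ln x))^2 * (norm (f x))^2 / x"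
        using x by (simp add: F_def norm_mult power_mult_distrib)
      also have "(exp (c * ln x))^2 = x powr (2*c)"
        using x by (simp add: powr_def exp_double[symmetric] power2_eq_square exp_add[symmetric] algebra_simps)
      also have "x powr (2*c) * (norm (f x))^2 / x = ft x"
        using x by (simp add: ft_def powr_diff)
      finally show "ft x = (norm (F (ln x)))^2 * (1/x)" by simp
    qed
    then show ?thesis by (simp add: zero_ereal_def)
  qed
  have "set_integrable lborel (einterval (-\<infinity>) \<infinity>) (\<lambda>v. (norm (F v))^2)"
  proof (rule interval_integral_substitution_nonneg(1)[of 0 \<infinity> ln "\<lambda>x. 1/x"])
    show "set_integrable lborel (einterval 0 \<infinity>) (\<lambda>x. (norm (F (ln x)))^2 * (1/x))" by (rule si3)
    show "((ereal \<circ> ln \<circ> real_of_ereal) \<longlongrightarrow> - \<infinity>) (at_right 0)"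
      by (simp add: zero_ereal_def ereal_tendsto_simps ln_at_0)
    show "((ereal \<circ> ln \<circ> real_of_ereal) \<longlongrightarrow> \<infinity>) (at_left \<infinity>)"
      by (simp add: ereal_tendsto_simps ln_at_top)
    fix x :: real
    show "0 < ereal x \<Longrightarrow> ereal x < \<infinity> \<Longrightarrow> DERIV ln x :> 1/x"
      by (auto intro!: derivative_eq_intros simp: zero_ereal_def)
    show "0 < ereal x \<Longrightarrow> ereal x < \<infinity> \<Longrightarrow> isCont (\<lambda>v. (norm (F v))^2) (ln x)"
      using F_cont by (intro continuous_intros) (auto simp: continuous_on_eq_continuous_at)
    show "0 < ereal x \<Longrightarrow> ereal x < \<infinity> \<Longrightarrow> isCont (\<lambda>x. 1/x) x"
      by (auto intro!: continuous_intros simp: zero_ereal_def)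
    show "0 < ereal x \<Longrightarrow> ereal x < \<infinity> \<Longrightarrow> 0 \<le> (norm (F (ln x)))^2" by simp
    show "0 \<le> ereal x \<Longrightarrow> ereal x \<le> \<infinity> \<Longrightarrow> 0 \<le> 1/x" by (simp add: zero_ereal_def)
  qed simp
  then show ?thesis by (simp add: set_integrable_def)
qed

lemma cpowr_pos: "u > 0 \<Longrightarrow> (complex_of_real u) powr s = exp (s * of_real (ln u))"
  by (simp add: powr_def Ln_of_real)

lemma trunc_eq:
  assumes L: "L \<ge> 0"
  shows "mellin_trunc c f (exp L) t = (\<integral>v. indicator {-L..L} v *\<^sub>R (F v * iexp (t * v)) \<partial>lborel)"
proof -
  define s where "s = complex_of_real c + \<i> * complex_of_real t - 1"
  define hh where "hh u = f u * (complex_of_real u) powr s" for u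
  have hh_cont: "continuous_on {0<..} hh"
  proof -
    have "continuous_on {0<..} (\<lambda>u. f u * exp (s * of_real (ln u)))"
      by (intro continuous_intros fcont) auto
    then show ?thesis
      by (rule continuous_on_cong[THEN iffD1, rotated 2]) (auto simp: hh_def cpowr_pos)
  qed
  have "mellin_trunc c f (exp L) t = (LBINT u=exp (-L)..exp L. hh u)"
    unfolding mellin_trunc_def hh_def s_def by (simp add: exp_minus divide_inverse)
  also have "\<dots> = (LBINT x=-L..L. exp x *\<^sub>R hh (exp x))"
  proof (rule interval_integral_substitution_finite[symmetric])
    show "-L \<le> L" using L by simp
    show "(exp has_real_derivative exp x) (at x within {-L..L})" for x
      by (auto intro!: derivative_eq_intros)
    show "continuous_on (exp ` {-L..L}) hh"
      by (rule continuous_on_subset[OF hh_cont]) auto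
    show "continuous_on {-L..L} exp" by (intro continuous_intros)
  qed
  also have "\<dots> = (LBINT x:{-L..L}. exp x *\<^sub>R hh (exp x))"
    using L by (simp add: interval_integral_Icc)
  also have "\<dots> = (\<integral>v. indicator {-L..L} v *\<^sub>R (F v * iexp (t * v)) \<partial>lborel)"
    unfolding set_lebesgue_integral_def
  proof (rule Bochner_Integration.integral_cong[OF refl])
    fix x :: real
    have "exp x *\<^sub>R hh (exp x) = F x * iexp (t * x)"
    proof -
      have "exp x *\<^sub>R hh (exp x) = f (exp x) * (exp (complex_of_real x) * exp (s * complex_of_real x))"
        by (simp add: hh_def cpowr_pos scaleR_conv_of_real exp_of_real algebra_simps)
      also have "exp (complex_of_real x) * exp (s * complex_of_real x) = exp (of_real (c * x)) * iexp (t * x)"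
        unfolding exp_add[symmetric] s_def by (simp add: algebra_simps)
      also have "exp (of_real (c * x)) = complex_of_real (exp (c * x))" by (rule exp_of_real)
      finally show ?thesis by (simp add: F_def algebra_simps)
    qed
    then show "indicator {-L..L} x *\<^sub>R exp x *\<^sub>R hh (exp x) = indicator {-L..L} x *\<^sub>R (F x * iexp (t * x))"
      by simp
  qed
  finally show ?thesis .
qed

end

lemma gauss_int: "(e::real) \<noteq> 0 \<Longrightarrow> integrable lborel (\<lambda>t. exp (- ((e * t)^2) / 2))"
proof -
  assume False: "e \<noteq> 0"
  have "integrable lborel (\<lambda>x. sqrt (2*pi) * std_normal_density (0 + e * x))"
    using lborel_integrable_real_affine_iff[OF False, of std_normal_density 0] by simp
  then show ?thesis by (simp add: std_normal_density_def)
qed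

lemma char_std': "(\<integral>x. std_normal_density x *\<^sub>R iexp (s * x) \<partial>lborel) = of_real (exp (- (s^2) / 2))"
proof -
  have "char std_normal_distribution s = of_real (exp (- (s^2) / 2))"
    by (simp add: char_std_normal_distribution)
  then show ?thesis
    unfolding char_def by (subst (asm) integral_density) (auto simp: normal_density_nonneg)
qed

lemma gauss_ft:
  assumes e: "e > 0"
  shows "(\<integral>t. of_real (exp (- ((e * t)^2) / 2)) * iexp (t * s) \<partial>lborel) = of_real (2 * pi * normal_density 0 e s)"
proof -
  have "of_real (exp (- ((s/e)^2) / 2)) = (\<integral>x. std_normal_density x *\<^sub>R iexp ((s/e) * x) \<partial>lborel)"
    by (rule char_std'[symmetric])
  also have "\<dots>
      = \<bar>e\<bar> *\<^sub>R (\<integral>t. std_normal_density (0 + e * t) *\<^sub>R iexp ((s/e) * (0 + e * t)) \<partial>lborel)"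
    using e by (intro lborel_integral_real_affine) simp
  also have "(\<lambda>t. std_normal_density (0 + e * t) *\<^sub>R iexp ((s/e) * (0 + e * t))) =
     (\<lambda>t. (1 / sqrt (2*pi)) *\<^sub>R (of_real (exp (- ((e * t)^2) / 2)) * iexp (t * s)))"
    using e by (auto simp: std_normal_density_def scaleR_conv_of_real fun_eq_iff algebra_simps)
  finally have "of_real (exp (- ((s/e)^2) / 2)) = \<bar>e\<bar> *\<^sub>R (\<integral>t. (1 / sqrt (2*pi)) *\<^sub>R (of_real (exp (- ((e * t)^2) / 2)) * iexp (t * s)) \<partial>lborel)" .
  then have "of_real (exp (- ((s/e)^2) / 2)) = e * (1 / sqrt (2*pi)) * (\<integral>t. of_real (exp (- ((e * t)^2) / 2)) * iexp (t * s) \<partial>lborel)"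
    using e by (simp add: scaleR_conv_of_real del: of_real_mult)
  then have "(\<integral>t. of_real (exp (- ((e * t)^2) / 2)) * iexp (t * s) \<partial>lborel) = of_real (sqrt (2*pi) / e * exp (- ((s/e)^2) / 2))"
    using e by (simp add: field_simps)
  also have "sqrt (2*pi) / e * exp (- ((s/e)^2) / 2) = 2 * pi * normal_density 0 e s"
  proof -
    have "sqrt (2 * pi * e^2) = sqrt (2*pi) * e" using e by (simp add: real_sqrt_mult)
    moreover have "sqrt (2*pi) * sqrt (2*pi) = 2 * pi" by simp
    ultimately show ?thesis using e
      by (simp add: normal_density_def power_divide field_simps)
  qed
  finally show ?thesis .
qed

context INV begin

definition phi where "phi e v0 t = iexp (- (t * v0)) * of_real (exp (- ((e * t)^2) / 2))"
definition TL where "TL L t = (\<integral>v. indicator {-L..L} v *\<^sub>R (F v * iexp (t * v)) \<partial>lborel)"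

lemma norm_iexp[simp]: "norm (iexp x) = 1"
  by (simp add: norm_exp)

lemma F_ind_int: "integrable lborel (\<lambda>v. indicator {-L..L} v *\<^sub>R F v)"
  using borel_integrable_atLeastAtMost'[OF continuous_on_subset[OF F_cont]] unfolding set_integrable_def by auto

lemma fubini_id:
  assumes e: "e > 0"
  shows "integrable lborel (\<lambda>t. TL L t * phi e v0 t)"
    and "(\<integral>t. TL L t * phi e v0 t \<partial>lborel) = (\<integral>v. indicator {-L..L} v *\<^sub>R (F v * of_real (2*pi*normal_density v0 e v)) \<partial>lborel)"
proof -
  have ps: "pair_sigma_finite (lborel :: real measure) (lborel :: real measure)"
    by (simp add: pair_sigma_finite_def lborel.sigma_finite_measure_axioms)
  define H where "H t v = indicator {-L..L} v *\<^sub>R (F v * iexp (t * v)) * phi e v0 t" for t v :: real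
  have Hm: "(\<lambda>(t, v). H t v) \<in> borel_measurable (lborel \<Otimes>\<^sub>M lborel)"
    unfolding H_def phi_def by measurable
  define CF where "CF = (\<integral>v. norm (indicator {-L..L} v *\<^sub>R F v) \<partial>lborel)"
  have nH: "norm (H t v) = norm (indicator {-L..L} v *\<^sub>R F v) * exp (- ((e * t)^2) / 2)" for t v
    by (simp add: H_def phi_def norm_mult)
  have Hint: "integrable (lborel \<Otimes>\<^sub>M lborel) (\<lambda>(t, v). H t v)"
  proof (rule pair_sigma_finite.Fubini_integrable[OF ps Hm])
    have "integrable lborel (\<lambda>t. CF * exp (- ((e * t)^2) / 2))"
      using gauss_int[of e] e by simp
    moreover have "(\<integral>v. norm (H t v) \<partial>lborel) = CF * exp (- ((e * t)^2) / 2)" for t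
      unfolding nH CF_def by simp
    ultimately show "integrable lborel (\<lambda>t. \<integral>v. norm (case (t, v) of (t, v) \<Rightarrow> H t v) \<partial>lborel)"
      by simp
    show "AE t in lborel. integrable lborel (\<lambda>v. case (t, v) of (t, v) \<Rightarrow> H t v)"
    proof (rule AE_I2)
      fix t
      show "integrable lborel (\<lambda>v. case (t, v) of (t, v) \<Rightarrow> H t v)"
      proof (rule Bochner_Integration.integrable_bound[OF F_ind_int[of L, THEN integrable_norm]])
        show "(\<lambda>v. case (t, v) of (t, v) \<Rightarrow> H t v) \<in> borel_measurable lborel"
          using Hm by (simp add: H_def phi_def)
        show "AE v in lborel. norm (case (t, v) of (t, v) \<Rightarrow> H t v) \<le> norm (norm (indicator {-L..L} v *\<^sub>R F v))"
          by (intro AE_I2) (auto simp: nH intro!: mult_left_le)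
      qed
    qed
  qed
  have inner1: "(\<integral>v. H t v \<partial>lborel) = TL L t * phi e v0 t" for t
    unfolding H_def TL_def by (rule integral_mult_left_zero)
  have inner2: "(\<integral>t. H t v \<partial>lborel) = indicator {-L..L} v *\<^sub>R (F v * of_real (2*pi*normal_density v0 e v))" for v
  proof -
    have "(\<integral>t. H t v \<partial>lborel) = indicator {-L..L} v *\<^sub>R (F v * (\<integral>t. of_real (exp (- ((e * t)^2) / 2)) * iexp (t * (v - v0)) \<partial>lborel))"
    proof -
      have "H t v = indicator {-L..L} v *\<^sub>R (F v * (of_real (exp (- ((e * t)^2) / 2)) * iexp (t * (v - v0))))" for t
      proof -
        have "iexp (t * v) * iexp (- (t * v0)) = iexp (t * (v - v0))"
          by (simp add: exp_add[symmetric] algebra_simps)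
        then show ?thesis unfolding H_def phi_def by (simp add: algebra_simps)
      qed
      then show ?thesis by simp
    qed
    also have "\<dots> = indicator {-L..L} v *\<^sub>R (F v * of_real (2*pi*normal_density 0 e (v - v0)))"
      by (subst gauss_ft[OF e]) (rule refl)
    also have "normal_density 0 e (v - v0) = normal_density v0 e v" by (simp add: normal_density_def)
    finally show ?thesis .
  qed
  show "integrable lborel (\<lambda>t. TL L t * phi e v0 t)"
    using pair_sigma_finite.integrable_fst[OF ps Hint] by (simp add: inner1)
  have "(\<integral>v. (\<integral>t. H t v \<partial>lborel) \<partial>lborel) = (\<integral>t. (\<integral>v. H t v \<partial>lborel) \<partial>lborel)"
    by (rule pair_sigma_finite.Fubini_integral[OF ps]) (use Hint in simp)
  then show "(\<integral>t. TL L t * phi e v0 t \<partial>lborel) = (\<integral>v. indicator {-L..L} v *\<^sub>R (F v * of_real (2*pi*normal_density v0 e v)) \<partial>lborel)"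
    by (simp add: inner1 inner2)
qed

lemma phi_meas[measurable]: "phi e v0 \<in> borel_measurable borel"
  unfolding phi_def by measurable

lemma phi_norm: "norm (phi e v0 t) = exp (- ((e * t)^2) / 2)"
  by (simp add: phi_def norm_mult)

lemma phi_norm_le1: "norm (phi e v0 t) \<le> 1"
  unfolding phi_norm by simp

lemma phi_nz: "phi e v0 t \<noteq> 0"
  by (simp add: phi_def)

lemma TL_meas[measurable]: "TL L \<in> borel_measurable borel"
proof -
  have m: "(\<lambda>t. TL L t * phi 1 0 t) \<in> borel_measurable borel"
    using fubini_id(1)[of 1 L 0] by (simp add: borel_measurable_integrable)
  have "(\<lambda>t. (TL L t * phi 1 0 t) / phi 1 0 t) \<in> borel_measurable borel"
    using m by measurable
  then show ?thesis using phi_nz[of 1 0] by simp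
qed

lemma Gphi_int: "integrable lborel (\<lambda>t. G t * phi e v0 t)"
  by (rule Bochner_Integration.integrable_bound[OF G_int[THEN integrable_norm]])
     (auto simp: norm_mult intro!: mult_left_le phi_norm_le1)

lemma gphi_int: "integrable lborel (\<lambda>t. g t * phi e v0 t)"
proof (rule integrable_cong_AE_imp[OF Gphi_int[of e v0]])
  show "(\<lambda>t. g t * phi e v0 t) \<in> borel_measurable lborel" by measurable
  show "AE t in lborel. G t * phi e v0 t = g t * phi e v0 t"
    using AE_gG by eventually_elim simp
qed

lemma gphi_eq: "(\<integral>t. g t * phi e v0 t \<partial>lborel) = (\<integral>t. G t * phi e v0 t \<partial>lborel)"
  by (rule integral_cong_AE) (use AE_gG in auto)

lemma TL_lim:
  assumes e: "e > 0"
  shows "((\<lambda>L. \<integral>t. TL L t * phi e v0 t \<partial>lborel) \<longlongrightarrow> (\<integral>t. g t * phi e v0 t \<partial>lborel)) at_top"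
proof -
  define A where "A L = (\<integral>\<^sup>+t. ennreal ((norm (TL L t - g t))^2) \<partial>lborel)" for L
  have A_lim: "(A \<longlongrightarrow> 0) at_top"
  proof -
    have mel': "((\<lambda>\<rho>. \<integral>\<^sup>+ t. ennreal ((cmod (mellin_trunc c f \<rho> t - g t))\<^sup>2) \<partial>lborel) \<longlongrightarrow> 0) at_top"
      using mel unfolding is_mellin_L2_def by simp
    have "((\<lambda>L. \<integral>\<^sup>+ t. ennreal ((cmod (mellin_trunc c f (exp L) t - g t))\<^sup>2) \<partial>lborel) \<longlongrightarrow> 0) at_top"
      using filterlim_compose[OF mel' exp_at_top] by (simp add: o_def)
    moreover have "\<forall>\<^sub>F L in at_top. (\<integral>\<^sup>+ t. ennreal ((cmod (mellin_trunc c f (exp L) t - g t))\<^sup>2) \<partial>lborel) = A L"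
      using eventually_ge_at_top[of "0::real"]
      by eventually_elim (simp add: A_def trunc_eq TL_def)
    ultimately show ?thesis by (rule Lim_transform_eventually)
  qed
  define B where "B = (\<integral>\<^sup>+t. ennreal ((norm (phi e v0 t))^2) \<partial>lborel)"
  have B_fin: "B < top"
  proof -
    have "integrable lborel (\<lambda>t. (norm (phi e v0 t))^2)"
    proof (rule Bochner_Integration.integrable_bound[OF gauss_int[of e]])
      show "AE t in lborel. norm ((norm (phi e v0 t))^2) \<le> norm (exp (- ((e * t)^2) / 2))"
      proof (rule AE_I2)
        fix t
        have "norm (phi e v0 t) * norm (phi e v0 t) \<le> norm (phi e v0 t)"
          by (rule mult_left_le_one_le) (auto simp: phi_norm_le1)
        then show "norm ((norm (phi e v0 t))^2) \<le> norm (exp (- ((e * t)^2) / 2))"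
          using phi_norm[of e v0 t] by (simp add: power2_eq_square)
      qed
    qed (use e in auto)
    from integrableD(2)[OF this] show ?thesis by (simp add: B_def top.not_eq_extremum)
  qed
  define D where "D L = (\<integral>t. TL L t * phi e v0 t \<partial>lborel) - (\<integral>t. g t * phi e v0 t \<partial>lborel)" for L
  have bound: "(ennreal (norm (D L)))^2 \<le> A L * B" for L
  proof -
    have i1: "integrable lborel (\<lambda>t. TL L t * phi e v0 t)" by (rule fubini_id(1)[OF e])
    have D_eq: "D L = (\<integral>t. (TL L t - g t) * phi e v0 t \<partial>lborel)"
      unfolding D_def using Bochner_Integration.integral_diff[OF i1 gphi_int[of e v0]] by (simp add: algebra_simps)
    have idiff: "integrable lborel (\<lambda>t. (TL L t - g t) * phi e v0 t)"
      using Bochner_Integration.integrable_diff[OF i1 gphi_int[of e v0]] by (simp add: algebra_simps)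
    have "ennreal (norm (D L)) \<le> (\<integral>\<^sup>+t. ennreal (norm ((TL L t - g t) * phi e v0 t)) \<partial>lborel)"
      unfolding D_eq by (rule integral_norm_bound_ennreal[OF idiff])
    also have "\<dots> = (\<integral>\<^sup>+t. ennreal (norm (TL L t - g t)) * ennreal (norm (phi e v0 t)) \<partial>lborel)"
      by (intro nn_integral_cong) (simp add: norm_mult ennreal_mult)
    finally have le1: "ennreal (norm (D L)) \<le> (\<integral>\<^sup>+t. ennreal (norm (TL L t - g t)) * ennreal (norm (phi e v0 t)) \<partial>lborel)" .
    have "(ennreal (norm (D L)))^2 \<le> (\<integral>\<^sup>+t. ennreal (norm (TL L t - g t)) * ennreal (norm (phi e v0 t)) \<partial>lborel)^2"
      by (rule power_mono[OF le1]) simp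
    also have "\<dots> \<le> (\<integral>\<^sup>+t. (ennreal (norm (TL L t - g t)))^2 \<partial>lborel) * (\<integral>\<^sup>+t. (ennreal (norm (phi e v0 t)))^2 \<partial>lborel)"
      by (rule Cauchy_Schwarz_nn_integral) measurable
    also have "\<dots> = A L * B"
      unfolding A_def B_def by (simp add: ennreal_power)
    finally show ?thesis .
  qed
  have sq_lim: "((\<lambda>L. (ennreal (norm (D L)))^2) \<longlongrightarrow> 0) at_top"
  proof (rule tendsto_sandwich[of "\<lambda>_. 0" _ _ "\<lambda>L. B * A L"])
    show "((\<lambda>L. B * A L) \<longlongrightarrow> 0) at_top"
      using ennreal_tendsto_cmult[OF B_fin A_lim] by simp
  qed (use bound in \<open>auto simp: mult.commute\<close>)
  then have "((\<lambda>L. ennreal ((norm (D L))^2)) \<longlongrightarrow> 0) at_top"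
    by (simp add: ennreal_power)
  then have "((\<lambda>L. (norm (D L))^2) \<longlongrightarrow> 0) at_top"
    using tendsto_ennreal_iff[of "\<lambda>L. (norm (D L))^2" at_top 0] by simp
  then have "((\<lambda>L. sqrt ((norm (D L))^2)) \<longlongrightarrow> sqrt 0) at_top"
    by (rule tendsto_real_sqrt)
  then have "((\<lambda>L. norm (D L)) \<longlongrightarrow> 0) at_top" by simp
  then have "(D \<longlongrightarrow> 0) at_top" by (simp add: tendsto_norm_zero_iff)
  then show ?thesis unfolding D_def by (simp add: LIM_zero_iff)
qed

lemma nd_le: "e > 0 \<Longrightarrow> normal_density v0 e v \<le> 1 / sqrt (2 * pi * e^2)"
proof -
  assume e: "e > 0"
  have "0 \<le> (v - v0)^2 / (2 * e^2)" by simp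
  then have "exp (- (v - v0)\<^sup>2 / (2 * e\<^sup>2)) \<le> 1" by simp
  then show ?thesis unfolding normal_density_def
    by (intro mult_left_le) auto
qed

lemma FK_int:
  assumes e: "e > 0"
  shows "integrable lborel (\<lambda>v. F v * of_real (normal_density v0 e v))"
proof -
  define M where "M = 1 / sqrt (2 * pi * e^2)"
  show ?thesis
  proof (rule Bochner_Integration.integrable_bound[of _ "\<lambda>v. ((norm (F v))^2 + M * normal_density v0 e v) / 2"])
    show "integrable lborel (\<lambda>v. ((norm (F v))^2 + M * normal_density v0 e v) / 2)"
      using F_L2 e by (intro integrable_divide Bochner_Integration.integrable_add integrable_mult_right integrable_normal_density) auto
    show "(\<lambda>v. F v * of_real (normal_density v0 e v)) \<in> borel_measurable lborel" by measurable
    show "AE v in lborel. norm (F v * of_real (normal_density v0 e v)) \<le> norm (((norm (F v))^2 + M * normal_density v0 e v) / 2)"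
    proof (rule AE_I2)
      fix v
      let ?a = "norm (F v)" and ?b = "normal_density v0 e v"
      have b0: "?b \<ge> 0" by simp
      have "2 * (?a * ?b) \<le> ?a^2 + ?b^2"
        using sum_squares_bound[of ?a ?b] by (simp add: power2_eq_square algebra_simps)
      also have "?b^2 \<le> M * ?b"
      proof -
        have "?b * ?b \<le> M * ?b"
          using mult_right_mono[OF nd_le[OF e, of v0 v] b0] by (simp add: M_def)
        then show ?thesis by (simp add: power2_eq_square)
      qed
      finally have "?a * ?b \<le> (?a^2 + M * ?b) / 2" by simp
      moreover have "0 \<le> (?a^2 + M * ?b) / 2" using b0 by (simp add: M_def)
      ultimately show "norm (F v * of_real ?b) \<le> norm ((?a^2 + M * ?b) / 2)"
        by (simp add: norm_mult)
    qed
  qed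
qed

lemma RHS_lim:
  assumes e: "e > 0"
  shows "((\<lambda>L. \<integral>v. indicator {-L..L} v *\<^sub>R (F v * of_real (2*pi*normal_density v0 e v)) \<partial>lborel)
     \<longlongrightarrow> (\<integral>v. F v * of_real (2*pi*normal_density v0 e v) \<partial>lborel)) at_top"
proof (rule integral_dominated_convergence_at_top[where w="\<lambda>v. norm (F v * of_real (2*pi*normal_density v0 e v))"])
  have "integrable lborel (\<lambda>v. of_real (2*pi) * (F v * of_real (normal_density v0 e v)))"
    using FK_int[OF e] by (rule integrable_mult_right)
  then show "integrable lborel (\<lambda>v. norm (F v * of_real (2*pi*normal_density v0 e v)))"
    by (simp add: algebra_simps)
  show "AE v in lborel. ((\<lambda>L. indicator {-L..L} v *\<^sub>R (F v * of_real (2*pi*normal_density v0 e v))) \<longlongrightarrow> F v * of_real (2*pi*normal_density v0 e v)) at_top"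
  proof (rule AE_I2)
    fix v :: real
    have "\<forall>\<^sub>F L in at_top. indicator {-L..L} v *\<^sub>R (F v * of_real (2*pi*normal_density v0 e v)) = F v * of_real (2*pi*normal_density v0 e v)"
      using eventually_ge_at_top[of "\<bar>v\<bar>"] by eventually_elim (auto simp: indicator_def)
    then show "((\<lambda>L. indicator {-L..L} v *\<^sub>R (F v * of_real (2*pi*normal_density v0 e v))) \<longlongrightarrow> F v * of_real (2*pi*normal_density v0 e v)) at_top"
      by (rule tendsto_eventually)
  qed
  show "\<forall>\<^sub>F L in at_top. AE v in lborel. norm (indicator {-L..L} v *\<^sub>R (F v * of_real (2*pi*normal_density v0 e v))) \<le> norm (F v * of_real (2*pi*normal_density v0 e v))"
    by (intro always_eventually allI AE_I2) (auto simp: indicator_def)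
qed measurable

lemma main_id:
  assumes e: "e > 0"
  shows "(\<integral>t. g t * phi e v0 t \<partial>lborel) = (\<integral>v. F v * of_real (2*pi*normal_density v0 e v) \<partial>lborel)"
proof (rule tendsto_unique[OF trivial_limit_at_top_linorder TL_lim[OF e]])
  show "((\<lambda>L. \<integral>t. TL L t * phi e v0 t \<partial>lborel) \<longlongrightarrow> (\<integral>v. F v * of_real (2*pi*normal_density v0 e v) \<partial>lborel)) at_top"
    using RHS_lim[OF e] by (simp add: fubini_id(2)[OF e])
qed

end

lemma half_sq: "(a::real) \<le> (1 + a^2) / 2"
proof -
  have "0 \<le> (a - 1)^2" by simp
  then show ?thesis by (simp add: power2_eq_square algebra_simps)
qed

lemma exp_neg_le_inv: "(y::real) > 0 \<Longrightarrow> exp (- y) \<le> 1 / y"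
proof -
  assume y: "y > 0"
  have "y \<le> exp y" using exp_ge_add_one_self[of y] by linarith
  then have "1 / exp y \<le> 1 / y" using y by (intro divide_left_mono) auto
  then show ?thesis by (simp add: exp_minus divide_inverse)
qed

context INV begin

lemma nd_int_sq: "e > 0 \<Longrightarrow> (\<integral>v. normal_density v0 e v * (v - v0)^2 \<partial>lborel) = e^2"
  using integral_normal_moment_even[of e v0 1] by (simp add: power2_eq_square)

lemma approx_id:
  "((\<lambda>e. \<integral>v. F v * of_real (normal_density v0 e v) \<partial>lborel) \<longlongrightarrow> F v0) (at_right 0)"
proof (rule tendstoI)
  fix \<eta> :: real assume \<eta>: "\<eta> > 0"
  define \<eta>' where "\<eta>' = \<eta> / 3"
  have \<eta>': "\<eta>' > 0" using \<eta> by (simp add: \<eta>'_def)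
  have "isCont F v0" using F_cont by (simp add: continuous_on_eq_continuous_at)
  then have "F \<midarrow>v0\<rightarrow> F v0" by (simp add: isCont_def)
  from LIM_D[OF this \<eta>'] obtain \<delta> where \<delta>: "\<delta> > 0"
    and \<delta>F: "\<And>v. v \<noteq> v0 \<Longrightarrow> norm (v - v0) < \<delta> \<Longrightarrow> norm (F v - F v0) < \<eta>'" by blast
  define Q where "Q = (\<integral>v. (norm (F v))^2 \<partial>lborel)"
  have Q0: "Q \<ge> 0" unfolding Q_def by simp
  define a0 where "a0 = norm (F v0)"
  define b2 where "b2 e = \<eta>' + (Q/2) * (2 * e / \<delta>^2) + (1/2 + a0) * e^2 / \<delta>^2" for e
  have "(b2 \<longlongrightarrow> b2 0) (at_right 0)"
    unfolding b2_def using \<delta> by (intro tendsto_intros) auto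
  then have "\<forall>\<^sub>F e in at_right 0. b2 e < \<eta>"
    by (rule order_tendstoD(2)) (use \<eta>' \<delta> \<eta> in \<open>simp add: b2_def \<eta>'_def\<close>)
  moreover have "\<forall>\<^sub>F e in at_right (0::real). e > 0" by (simp add: eventually_at_right_less)
  ultimately show "\<forall>\<^sub>F e in at_right 0. dist (\<integral>v. F v * of_real (normal_density v0 e v) \<partial>lborel) (F v0) < \<eta>"
  proof eventually_elim
    case (elim e)
    then have e: "e > 0" and b2e: "b2 e < \<eta>" by auto
    define nd where "nd v = normal_density v0 e v" for v
    define M where "M = 1 / sqrt (2 * pi * e^2) * exp (- (\<delta>^2) / (2 * e^2))"
    have M0: "M \<ge> 0" by (simp add: M_def)
    have M_le: "M \<le> 2 * e / \<delta>^2"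
    proof -
      have s: "sqrt (2 * pi * e^2) = sqrt (2 * pi) * e" using e by (simp add: real_sqrt_mult)
      have s1: "sqrt (2 * pi) \<ge> 1" using pi_gt3 by simp
      have "1 / sqrt (2 * pi * e^2) \<le> 1 / e"
        unfolding s using e s1 by (intro divide_left_mono) (auto simp: mult_le_cancel_right1)
      moreover have "exp (- (\<delta>^2) / (2 * e^2)) \<le> 2 * e^2 / \<delta>^2"
        using exp_neg_le_inv[of "\<delta>^2 / (2 * e^2)"] e \<delta> by (simp add: field_simps)
      ultimately have "M \<le> (1 / e) * (2 * e^2 / \<delta>^2)"
        unfolding M_def using e by (intro mult_mono) auto
      also have "\<dots> = 2 * e / \<delta>^2" using e by (simp add: power2_eq_square field_simps)
      finally show ?thesis .
    qed
    have nd0: "nd v \<ge> 0" for v by (simp add: nd_def)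
    have ptw: "norm (F v - F v0) * nd v \<le> \<eta>' * nd v + (M/2) * (norm (F v))^2 + ((1/2 + a0) / \<delta>^2) * (nd v * (v - v0)^2)" for v
    proof (cases "\<bar>v - v0\<bar> < \<delta>")
      case True
      have "norm (F v - F v0) \<le> \<eta>'"
        using \<delta>F[of v] True \<eta>' by (cases "v = v0") auto
      then have "norm (F v - F v0) * nd v \<le> \<eta>' * nd v" using nd0 by (intro mult_right_mono) auto
      moreover have "0 \<le> (M/2) * (norm (F v))^2" using M0 by simp
      moreover have "0 \<le> ((1/2 + a0) / \<delta>^2) * (nd v * (v - v0)^2)" using nd0 by (simp add: a0_def)
      ultimately show ?thesis by linarith
    next
      case False
      then have d2: "\<delta>^2 \<le> (v - v0)^2" using \<delta> by (simp add: abs_le_square_iff[symmetric])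
      have ndM: "nd v \<le> M"
      proof -
        have "exp (- (v - v0)\<^sup>2 / (2 * e\<^sup>2)) \<le> exp (- (\<delta>^2) / (2 * e^2))"
          using d2 e by (simp add: divide_right_mono)
        then show ?thesis unfolding nd_def M_def normal_density_def
          by (intro mult_left_mono) auto
      qed
      have nd_sq: "nd v \<le> nd v * (v - v0)^2 / \<delta>^2"
      proof -
        have "1 \<le> (v - v0)^2 / \<delta>^2" using d2 \<delta> by simp
        then have "nd v * 1 \<le> nd v * ((v - v0)^2 / \<delta>^2)" using nd0 by (intro mult_left_mono) auto
        then show ?thesis by simp
      qed
      have "norm (F v - F v0) \<le> norm (F v) + a0" unfolding a0_def by (rule norm_triangle_ineq4)
      also have "\<dots> \<le> (1 + (norm (F v))^2) / 2 + a0" using half_sq[of "norm (F v)"] by simp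
      finally have n1: "norm (F v - F v0) \<le> (norm (F v))^2 / 2 + (1/2 + a0)" by (simp add: add_divide_distrib)
      have "norm (F v - F v0) * nd v \<le> ((norm (F v))^2 / 2 + (1/2 + a0)) * nd v"
        using n1 nd0 by (intro mult_right_mono) auto
      also have "\<dots> = ((norm (F v))^2 / 2) * nd v + (1/2 + a0) * nd v" by (simp add: algebra_simps)
      also have "\<dots> \<le> ((norm (F v))^2 / 2) * M + (1/2 + a0) * (nd v * (v - v0)^2 / \<delta>^2)"
        using ndM nd_sq by (intro add_mono mult_left_mono) (auto simp: a0_def)
      also have "\<dots> \<le> \<eta>' * nd v + (M/2) * (norm (F v))^2 + ((1/2 + a0) / \<delta>^2) * (nd v * (v - v0)^2)"
        using \<eta>' nd0 by (simp add: algebra_simps)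
      finally show ?thesis .
    qed
    have i_nd: "integrable lborel nd" using integrable_normal_density[of e v0] e unfolding nd_def[abs_def] by simp
    have i_mom: "integrable lborel (\<lambda>v. nd v * (v - v0)^2)"
      using integrable_normal_moment[of e v0 2] e unfolding nd_def by simp
    have i_F: "integrable lborel (\<lambda>v. F v * of_real (nd v))"
      unfolding nd_def by (rule FK_int[OF e])
    have i_c: "integrable lborel (\<lambda>v. F v0 * of_real (nd v))"
      using i_nd by simp
    have int_nd: "(\<integral>v. nd v \<partial>lborel) = 1" using integral_normal_density[of e v0] e unfolding nd_def[abs_def] by simp
    have "(\<integral>v. F v * of_real (nd v) \<partial>lborel) - F v0 = (\<integral>v. F v * of_real (nd v) - F v0 * of_real (nd v) \<partial>lborel)"
      using int_nd by (simp add: Bochner_Integration.integral_diff[OF i_F i_c])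
    also have "\<dots> = (\<integral>v. (F v - F v0) * of_real (nd v) \<partial>lborel)" by (simp add: algebra_simps)
    finally have eq: "(\<integral>v. F v * of_real (nd v) \<partial>lborel) - F v0 = (\<integral>v. (F v - F v0) * of_real (nd v) \<partial>lborel)" .
    have i_diff: "integrable lborel (\<lambda>v. (F v - F v0) * of_real (nd v))"
      using Bochner_Integration.integrable_diff[OF i_F i_c] by (simp add: algebra_simps)
    have i_bound: "integrable lborel (\<lambda>v. \<eta>' * nd v + (M/2) * (norm (F v))^2 + ((1/2 + a0) / \<delta>^2) * (nd v * (v - v0)^2))"
      using i_nd i_mom F_L2 by (intro Bochner_Integration.integrable_add integrable_mult_right) auto
    have "norm ((\<integral>v. F v * of_real (nd v) \<partial>lborel) - F v0) \<le> (\<integral>v. norm ((F v - F v0) * of_real (nd v)) \<partial>lborel)"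
      unfolding eq by (rule integral_norm_bound)
    also have "\<dots> \<le> (\<integral>v. \<eta>' * nd v + (M/2) * (norm (F v))^2 + ((1/2 + a0) / \<delta>^2) * (nd v * (v - v0)^2) \<partial>lborel)"
    proof (rule integral_mono[OF i_diff[THEN integrable_norm] i_bound])
      fix v show "norm ((F v - F v0) * of_real (nd v)) \<le> \<eta>' * nd v + (M/2) * (norm (F v))^2 + ((1/2 + a0) / \<delta>^2) * (nd v * (v - v0)^2)"
        using ptw[of v] nd0[of v] by (simp add: norm_mult)
    qed
    also have "\<dots> = \<eta>' + (M/2) * Q + ((1/2 + a0) / \<delta>^2) * e^2"
    proof -
      have "(\<integral>v. nd v * (v - v0)^2 \<partial>lborel) = e^2" unfolding nd_def by (rule nd_int_sq[OF e])
      then show ?thesis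
        using i_nd i_mom F_L2 int_nd
        by (simp add: Bochner_Integration.integral_add integrable_mult_right Q_def)
    qed
    also have "\<dots> \<le> b2 e"
    proof -
      have "M * Q \<le> (2 * e / \<delta>^2) * Q" by (rule mult_right_mono[OF M_le Q0])
      then have "(M/2) * Q \<le> (Q/2) * (2 * e / \<delta>^2)" by (simp add: algebra_simps)
      then show ?thesis unfolding b2_def by (simp add: power2_eq_square)
    qed
    finally show ?case using b2e by (simp add: dist_norm nd_def)
  qed
qed

lemma g_side_lim: "((\<lambda>e. \<integral>t. g t * phi e v0 t \<partial>lborel) \<longlongrightarrow> Psi 0 v0) (at_right 0)"
proof -
  have P0: "Psi 0 v0 = (\<integral>t. G t * iexp (- (t * v0)) \<partial>lborel)"
    by (simp add: Psi_def h_def)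
  have "((\<lambda>s. \<integral>t. G t * phi (inverse s) v0 t \<partial>lborel) \<longlongrightarrow> (\<integral>t. G t * iexp (- (t * v0)) \<partial>lborel)) at_top"
  proof (rule integral_dominated_convergence_at_top[where w="\<lambda>t. norm (G t)"])
    show "integrable lborel (\<lambda>t. norm (G t))" using G_int by simp
    show "AE t in lborel. ((\<lambda>s. G t * phi (inverse s) v0 t) \<longlongrightarrow> G t * iexp (- (t * v0))) at_top"
    proof (rule AE_I2)
      fix t :: real
      have "((\<lambda>s. inverse s) \<longlongrightarrow> (0::real)) at_top"
        by (rule tendsto_inverse_0_at_top[OF filterlim_ident])
      then have "((\<lambda>s. G t * (iexp (- (t * v0)) * of_real (exp (- ((inverse s * t)^2) / 2)))) \<longlongrightarrow>
                  G t * (iexp (- (t * v0)) * of_real (exp (- ((0 * t)^2) / 2)))) at_top"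
        by (intro tendsto_intros) auto
      then show "((\<lambda>s. G t * phi (inverse s) v0 t) \<longlongrightarrow> G t * iexp (- (t * v0))) at_top"
        by (simp add: phi_def)
    qed
    show "\<forall>\<^sub>F s in at_top. AE t in lborel. norm (G t * phi (inverse s) v0 t) \<le> norm (G t)"
      by (intro always_eventually allI AE_I2) (auto simp: norm_mult intro!: mult_left_le phi_norm_le1)
  qed measurable
  then have "((\<lambda>e. \<integral>t. G t * phi e v0 t \<partial>lborel) \<longlongrightarrow> Psi 0 v0) (filtermap inverse at_top)"
    unfolding P0 by (simp add: filterlim_filtermap o_def)
  then show ?thesis
    by (simp add: at_right_to_top[symmetric] gphi_eq)
qed

lemma inversion: "F v0 = Psi 0 v0 / (2 * pi)"
proof -
  have eq: "(\<integral>t. g t * phi e v0 t \<partial>lborel) = of_real (2*pi) * (\<integral>v. F v * of_real (normal_density v0 e v) \<partial>lborel)"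
    if e: "e > 0" for e
  proof -
    have "(\<integral>t. g t * phi e v0 t \<partial>lborel) = (\<integral>v. of_real (2*pi) * (F v * of_real (normal_density v0 e v)) \<partial>lborel)"
      unfolding main_id[OF e] by (simp add: algebra_simps)
    then show ?thesis by simp
  qed
  have lim2: "((\<lambda>e. of_real (2*pi) * (\<integral>v. F v * of_real (normal_density v0 e v) \<partial>lborel)) \<longlongrightarrow> of_real (2*pi) * F v0) (at_right 0)"
    by (intro tendsto_intros approx_id)
  have ev: "\<forall>\<^sub>F e in at_right (0::real). of_real (2*pi) * (\<integral>v. F v * of_real (normal_density v0 e v) \<partial>lborel) = (\<integral>t. g t * phi e v0 t \<partial>lborel)"
    by (simp add: eventually_at_right_less eq eventually_mono[OF eventually_at_right_less])
  have "((\<lambda>e. \<integral>t. g t * phi e v0 t \<partial>lborel) \<longlongrightarrow> of_real (2*pi) * F v0) (at_right 0)"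
    by (rule Lim_transform_eventually[OF lim2 ev])
  from tendsto_unique[OF trivial_limit_at_right_real this g_side_lim]
  show ?thesis by (simp add: field_simps)
qed

end

context INV begin

definition Phi where "Phi k x = of_real ((1 / (2*pi)) * x powr (-c)) * Psi k (ln x)"

lemma f_eq: "x > 0 \<Longrightarrow> f x = Phi 0 x"
proof -
  assume x: "x > 0"
  have "F (ln x) = Psi 0 (ln x) / (2 * pi)" by (rule inversion)
  moreover have "F (ln x) = of_real (x powr c) * f x"
    using x by (simp add: F_def powr_def mult.commute)
  ultimately have "f x = Psi 0 (ln x) / (2 * pi) / of_real (x powr c)"
    using x by (simp add: field_simps)
  also have "\<dots> = Phi 0 x"
    using x by (simp add: Phi_def powr_minus field_simps)
  finally show ?thesis .
qed

lemma Phi_deriv: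
  assumes x: "x > 0"
  shows "(Phi k has_vector_derivative (of_real ((1 / (2*pi)) * (-c) * x powr (-c-1)) * Psi k (ln x)
      + of_real ((1 / (2*pi)) * x powr (-c-1)) * Psi (Suc k) (ln x))) (at x)"
proof -
  have "((\<lambda>x. of_real ((1 / (2*pi)) * x powr (-c)) * Psi k (ln x)) has_vector_derivative
    (of_real ((1 / (2*pi)) * (-c) * x powr (-c-1)) * Psi k (ln x) + of_real ((1 / (2*pi)) * x powr (-c-1)) * Psi (Suc k) (ln x))) (at x)"
    using base_deriv[OF x, of "1/(2*pi)" "-c" k] by simp
  then show ?thesis by (simp add: Phi_def[abs_def])
qed

lemma md_step:
  assumes x: "x > 0"
  shows "of_real x * (of_real ((1 / (2*pi)) * (-c) * x powr (-c-1)) * Psi k (ln x)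
      + of_real ((1 / (2*pi)) * x powr (-c-1)) * Psi (Suc k) (ln x)) + of_real c * Phi k x = Phi (Suc k) x"
proof -
  have xx: "x * x powr (-c-1) = x powr (-c)"
    using x by (simp add: powr_diff powr_minus field_simps)
  have xy: "complex_of_real (x powr (-c)) = complex_of_real x * complex_of_real (x powr (-c-1))"
    using xx by (metis of_real_mult)
  define A where "A = complex_of_real (1 / (2*pi))"
  have e1: "complex_of_real ((1 / (2*pi)) * (-c) * x powr (-c-1)) = A * (- of_real c) * of_real (x powr (-c-1))"
    by (simp add: A_def)
  have e2: "complex_of_real ((1 / (2*pi)) * x powr (-c-1)) = A * of_real (x powr (-c-1))"
    by (simp add: A_def)
  have e3: "complex_of_real ((1 / (2*pi)) * x powr (-c)) = A * of_real (x powr (-c))"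
    by (simp add: A_def)
  show ?thesis
    unfolding Phi_def e1 e2 e3 xy by (simp add: algebra_simps)
qed

lemma md_eq: "x > 0 \<Longrightarrow> (mellin_deriv c ^^ k) f x = Phi k x"
proof (induction k arbitrary: x)
  case 0 then show ?case by (simp add: f_eq)
next
  case (Suc k)
  have d: "((mellin_deriv c ^^ k) f has_vector_derivative (of_real ((1 / (2*pi)) * (-c) * x powr (-c-1)) * Psi k (ln x)
      + of_real ((1 / (2*pi)) * x powr (-c-1)) * Psi (Suc k) (ln x))) (at x)"
    by (rule has_vector_derivative_transform_within_open[OF Phi_deriv[OF Suc.prems] open_greaterThan])
       (use Suc in auto)
  have v: "vector_derivative ((mellin_deriv c ^^ k) f) (at x) = of_real ((1 / (2*pi)) * (-c) * x powr (-c-1)) * Psi k (ln x)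
      + of_real ((1 / (2*pi)) * x powr (-c-1)) * Psi (Suc k) (ln x)"
    by (rule vector_derivative_at[OF d])
  have "(mellin_deriv c ^^ Suc k) f x = of_real x * vector_derivative ((mellin_deriv c ^^ k) f) (at x) + of_real c * (mellin_deriv c ^^ k) f x"
    by (simp only: funpow.simps(2) o_def mellin_deriv_def)
  also have "\<dots> = Phi (Suc k) x"
    unfolding v Suc.IH[OF Suc.prems] by (rule md_step[OF Suc.prems])
  finally show ?case .
qed

lemma smooth: "smooth_on {0<..} f"
proof -
  have "\<exists>\<phi>. nice \<phi> \<and> (\<forall>x>0. higher_vderiv k f x = \<phi> x)" for k
  proof (induction k)
    case 0
    have "nice (Phi 0)" by (rule nice_base[where a="1/(2*pi)" and p="-c" and m=0]) (simp add: Phi_def)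
    then show ?case by (intro exI[of _ "Phi 0"]) (simp add: higher_vderiv_def f_eq)
  next
    case (Suc k)
    then obtain \<phi> where n: "nice \<phi>" and eq: "\<forall>x>0. higher_vderiv k f x = \<phi> x" by blast
    from nice_deriv[OF n] obtain \<phi>' where n': "nice \<phi>'" and d: "\<forall>x>0. (\<phi> has_vector_derivative \<phi>' x) (at x)" by blast
    have "higher_vderiv (Suc k) f x = \<phi>' x" if x: "x > 0" for x
    proof -
      have "(higher_vderiv k f has_vector_derivative \<phi>' x) (at x)"
        by (rule has_vector_derivative_transform_within_open[OF d[rule_format, OF x] open_greaterThan])
           (use x eq in auto)
      then show ?thesis by (simp add: higher_vderiv_def vector_derivative_at)
    qed
    then show ?case using n' by blast
  qed
  then show ?thesis
    unfolding smooth_on_def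
  proof (intro allI ballI)
    fix k x assume H: "\<And>k. \<exists>\<phi>. nice \<phi> \<and> (\<forall>x>0. higher_vderiv k f x = \<phi> x)" and x: "x \<in> ({0<..} :: real set)"
    from H[of k] obtain \<phi> where n: "nice \<phi>" and eq: "\<forall>x>0. higher_vderiv k f x = \<phi> x" by blast
    from nice_deriv[OF n] obtain \<phi>' where d: "\<forall>x>0. (\<phi> has_vector_derivative \<phi>' x) (at x)" by blast
    have "(higher_vderiv k f has_vector_derivative \<phi>' x) (at x)"
      by (rule has_vector_derivative_transform_within_open[OF d[rule_format] open_greaterThan])
         (use x eq in auto)
    then show "higher_vderiv k f differentiable at x" by (rule differentiableI_vector)
  qed
qed

lemma limits:
  "((\<lambda>x. complex_of_real (x powr c) * (mellin_deriv c ^^ k) f x) \<longlongrightarrow> 0) (at_right 0) \<and>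
   ((\<lambda>x. complex_of_real (x powr c) * (mellin_deriv c ^^ k) f x) \<longlongrightarrow> 0) at_top"
proof -
  have L2: "integrable lborel (\<lambda>v. (norm (Psi 0 v))^2)"
  proof -
    have "integrable lborel (\<lambda>v. (2*pi)^2 * (norm (F v))^2)" using F_L2 by simp
    moreover have "(norm (Psi 0 v))^2 = (2*pi)^2 * (norm (F v))^2" for v
    proof -
      have "Psi 0 v = of_real (2*pi) * F v" using inversion[of v] by (simp add: field_simps)
      then show ?thesis by (simp add: norm_mult power_mult_distrib)
    qed
    ultimately show ?thesis by simp
  qed
  have lims: "(Psi k \<longlongrightarrow> 0) at_top" "(Psi k \<longlongrightarrow> 0) at_bot"
    using Psi_all_tendsto[OF L2] by auto
  have eqx: "complex_of_real (x powr c) * (mellin_deriv c ^^ k) f x = Psi k (ln x) / (2 * pi)" if x: "x > 0" for x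
  proof -
    have "x powr c * x powr (-c) = 1" using x by (simp add: powr_minus)
    then have "complex_of_real (x powr c) * complex_of_real (x powr (-c)) = 1"
      by (metis of_real_1 of_real_mult)
    then show ?thesis using x
      by (simp add: md_eq Phi_def field_simps)
  qed
  have A: "((\<lambda>x. Psi k (ln x) / (2 * pi)) \<longlongrightarrow> 0) (at_right 0)"
    using tendsto_divide[OF filterlim_compose[OF lims(2) ln_at_0] tendsto_const[of "complex_of_real (2*pi)"]] by simp
  have B: "((\<lambda>x. Psi k (ln x) / (2 * pi)) \<longlongrightarrow> 0) at_top"
    using tendsto_divide[OF filterlim_compose[OF lims(1) ln_at_top] tendsto_const[of "complex_of_real (2*pi)"]] by simp
  have evA: "\<forall>\<^sub>F x in at_right 0. Psi k (ln x) / (2 * pi) = complex_of_real (x powr c) * (mellin_deriv c ^^ k) f x"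
    using eventually_at_right_less by (rule eventually_mono) (simp add: eqx)
  have evB: "\<forall>\<^sub>F x in at_top. Psi k (ln x) / (2 * pi) = complex_of_real (x powr c) * (mellin_deriv c ^^ k) f x"
    using eventually_gt_at_top[of "0::real"] by (rule eventually_mono) (simp add: eqx)
  show ?thesis using Lim_transform_eventually[OF A evA] Lim_transform_eventually[OF B evB] by blast
qed

end

theorem theorem1:
  fixes c T :: real and f :: "real \<Rightarrow> complex"
  assumes "T > 0" and "B2 c T f"
  shows "smooth_on {0<..} f \<and>
    (\<forall>k::nat.
      ((\<lambda>x. complex_of_real (x powr c) * (mellin_deriv c ^^ k) f x) \<longlongrightarrow> 0) (at_right 0) \<and>
      ((\<lambda>x. complex_of_real (x powr c) * (mellin_deriv c ^^ k) f x) \<longlongrightarrow> 0) at_top)"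
proof -
  from assms(2) obtain g where X: "X2 c f" and C: "continuous_on {0<..} f"
    and M: "is_mellin_L2 c f g" and S: "AE t in lborel. \<bar>t\<bar> > T \<longrightarrow> g t = 0"
    unfolding B2_def by blast
  interpret INV c T f g
    by unfold_locales (use assms(1) X C M S in auto)
  show ?thesis using smooth limits by blast
qed

end
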